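(* Let $\hat W=\begin{pmatrix}\hat 1&\hat{\mathbf c}&\hat d\\0&\hat{\mathsf A}&\hat{\mathbf b}\\0&0&\hat 1\end{pmatrix}$ be a first degree iMPO in regular form. Then there exist a row vector $\mathbf t$ and a column vector $\mathbf s$ (of length $\chi$) such that, with $$L=\begin{pmatrix}1&\mathbf t&0\\0&\mathrm{Id}&\mathbf s\\0&0&1\end{pmatrix},\qquad \hat W'=L\hat WL^{-1},$$ the identity component of $\hat W'$ has the form $$W'_0=\langle\hat 1,\hat W'\rangle=\begin{pmatrix}1&0&d_0'\\0&A_0&0\\0&0&1\end{pmatrix}$$ for some number $d_0'$, where $A_0=\langle\hat 1,\hat{\mathsf A}\rangle$. Moreover the middle block of $\hat W'$ equals $\hat{\mathsf A}$.
   Context: $\mathcal A$ is the algebra of operators on $\mathbb C^q$ with inner product $\langle\hat A,\hat B\rangle=\mathrm{Tr}[\hat A^\dagger\hat B]/\mathrm{Tr}[\hat 1]$ and an orthonormal basis $\{\hat O_\alpha\}$ with $\hat O_0=\hat 1$; for a matrix with entries in $\mathcal A$, $\langle\hat 1,\cdot\rangle$ is taken entrywise, and $(W_\alpha)_{ab}=\langle\hat O_\alpha,\hat W_{ab}\rangle$. The transfer matrix of a square such matrix is $T_W=\sum_\alpha\overline{W_\alpha}\otimes W_\alpha$. An iMPO in regular form of bond dimension $\chi$ is a $(\chi+2)\times(\chi+2)$ matrix with entries in $\mathcal A$ of the displayed block form (block sizes $1,\chi,1$); it is first degree if every eigenvalue of $T_A$ (transfer matrix of $\hat{\mathsf A}$)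 has modulus $<1$. *)

theory Defs
  imports "Jordan_Normal_Form.Char_Poly"
begin

text \<open>Operators on C^q are q x q complex matrices.  A matrix with entries in the
operator algebra is a function  nat => nat => complex mat  (entries indexed from 0).\<close>

definition op_trace :: "complex mat \<Rightarrow> complex" where
  "op_trace X = (\<Sum>i<dim_row X. X $$ (i,i))"

definition op_adj :: "complex mat \<Rightarrow> complex mat" where
  "op_adj X = mat (dim_col X) (dim_row X) (\<lambda>(i,j). cnj (X $$ (j,i)))"

definition op_inner :: "nat \<Rightarrow> complex mat \<Rightarrow> complex mat \<Rightarrow> complex" where
  "op_inner q X Y = op_trace (op_adj X * Y) / of_nat q"

definition ortho_basis :: "nat \<Rightarrow> (nat \<Rightarrow> complex mat) \<Rightarrow> bool" where
  "ortho_basis q Ob \<longleftrightarrow>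
     (\<forall>\<alpha><q^2. Ob \<alpha> \<in> carrier_mat q q) \<and>
     (\<forall>\<alpha><q^2. \<forall>\<beta><q^2. op_inner q (Ob \<alpha>) (Ob \<beta>) = (if \<alpha> = \<beta> then 1 else 0)) \<and>
     Ob 0 = 1\<^sub>m q"

definition comp_mat :: "nat \<Rightarrow> complex mat \<Rightarrow> nat \<Rightarrow> (nat \<Rightarrow> nat \<Rightarrow> complex mat) \<Rightarrow> complex mat" where
  "comp_mat q O' n W = mat n n (\<lambda>(a,b). op_inner q O' (W a b))"

definition kron :: "nat \<Rightarrow> complex mat \<Rightarrow> complex mat \<Rightarrow> complex mat" where
  "kron n X Y = mat (n*n) (n*n) (\<lambda>(i,j). X $$ (i div n, j div n) * Y $$ (i mod n, j mod n))"

definition conj_mat :: "complex mat \<Rightarrow> complex mat" where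
  "conj_mat X = mat (dim_row X) (dim_col X) (\<lambda>(i,j). cnj (X $$ (i,j)))"

definition transfer_mat :: "nat \<Rightarrow> (nat \<Rightarrow> complex mat) \<Rightarrow> nat \<Rightarrow> (nat \<Rightarrow> nat \<Rightarrow> complex mat) \<Rightarrow> complex mat" where
  "transfer_mat q Ob n W = mat (n*n) (n*n)
     (\<lambda>(i,j). \<Sum>\<alpha><q^2. kron n (conj_mat (comp_mat q (Ob \<alpha>) n W)) (comp_mat q (Ob \<alpha>) n W) $$ (i,j))"

text \<open>iMPO in regular form of bond dimension chi: (chi+2)x(chi+2) operator matrix
 [[1, c, d],[0, A, b],[0, 0, 1]]; indices 0, 1..chi, chi+1.\<close>
definition regular_form :: "nat \<Rightarrow> nat \<Rightarrow> (nat \<Rightarrow> nat \<Rightarrow> complex mat) \<Rightarrow> bool" where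
  "regular_form q \<chi> W \<longleftrightarrow>
     (\<forall>i\<le>\<chi>+1. \<forall>j\<le>\<chi>+1. W i j \<in> carrier_mat q q) \<and>
     W 0 0 = 1\<^sub>m q \<and> W (\<chi>+1) (\<chi>+1) = 1\<^sub>m q \<and>
     (\<forall>i. 1 \<le> i \<and> i \<le> \<chi>+1 \<longrightarrow> W i 0 = 0\<^sub>m q q) \<and>
     (\<forall>j\<le>\<chi>. W (\<chi>+1) j = 0\<^sub>m q q)"

definition mid_block :: "nat \<Rightarrow> (nat \<Rightarrow> nat \<Rightarrow> complex mat) \<Rightarrow> nat \<Rightarrow> nat \<Rightarrow> complex mat" where
  "mid_block \<chi> W a b = W (a+1) (b+1)"

definition first_degree :: "nat \<Rightarrow> (nat \<Rightarrow> complex mat) \<Rightarrow> nat \<Rightarrow> (nat \<Rightarrow> nat \<Rightarrow> complex mat) \<Rightarrow> bool" where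
  "first_degree q Ob \<chi> W \<longleftrightarrow>
     (\<forall>ev. eigenvalue (transfer_mat q Ob \<chi> (mid_block \<chi> W)) ev \<longrightarrow> cmod ev < 1)"

definition L_mat :: "nat \<Rightarrow> (nat \<Rightarrow> complex) \<Rightarrow> (nat \<Rightarrow> complex) \<Rightarrow> complex mat" where
  "L_mat \<chi> t s = mat (\<chi>+2) (\<chi>+2) (\<lambda>(i,j).
      if i = j then 1
      else if i = 0 \<and> 1 \<le> j \<and> j \<le> \<chi> then t (j - 1)
      else if 1 \<le> i \<and> i \<le> \<chi> \<and> j = \<chi>+1 then s (i - 1)
      else 0)"

definition sandwich :: "nat \<Rightarrow> nat \<Rightarrow> complex mat \<Rightarrow> (nat \<Rightarrow> nat \<Rightarrow> complex mat) \<Rightarrow> complex mat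
    \<Rightarrow> nat \<Rightarrow> nat \<Rightarrow> complex mat" where
  "sandwich q n L W M i j =
     mat q q (\<lambda>(x,y). \<Sum>k<n. \<Sum>l<n. L $$ (i,k) * (W k l) $$ (x,y) * M $$ (l,j))"

end

theory Submission
  imports Defs "Jordan_Normal_Form.Spectral_Radius"
begin

lemma sum_pair: fixes n k :: nat shows "(\<Sum>j<n*k. g j) = (\<Sum>c<n. \<Sum>d<k. (g (c*k+d) :: 'a::comm_monoid_add))"
proof -
  have "(\<Sum>j<n*k. g j) = (\<Sum>c<n. sum g {c*k..<c*k+k})"
    using sum.nat_group[of g k n] by simp
  also have "\<dots> = (\<Sum>c<n. \<Sum>d<k. g (c*k+d))"
  proof (rule sum.cong[OF refl])
    fix c show "sum g {c*k..<c*k+k} = (\<Sum>d<k. g (c*k+d))"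
      using sum.shift_bounds_nat_ivl[of g 0 "c*k" k] by (simp add: atLeast0LessThan add.commute)
  qed
  finally show ?thesis .
qed

lemma idx_lt: assumes "a < (n::nat)" "b < n" shows "a*n+b < n*n"
proof -
  have "a*n + b < a*n+n" using assms by simp
  also have "\<dots> = (a+1)*n" by simp
  also have "\<dots> \<le> n*n" using assms by (intro mult_le_mono1) simp
  finally show ?thesis .
qed

definition nn :: "complex \<Rightarrow> bool" where "nn z \<longleftrightarrow> Im z = 0 \<and> 0 \<le> Re z"

lemma nn_sum: "(\<And>a. a \<in> A \<Longrightarrow> nn (f a)) \<Longrightarrow> nn (sum f A)"
  unfolding nn_def by (auto simp: Im_sum Re_sum intro: sum_nonneg)

lemma nn_add: "nn a \<Longrightarrow> nn b \<Longrightarrow> nn (a + b)" unfolding nn_def by auto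

lemma nn_sq: "nn (cnj z * z)" unfolding nn_def by (simp add: complex_mult_cnj)

definition QF :: "nat \<Rightarrow> (nat \<Rightarrow> complex) \<Rightarrow> (nat \<Rightarrow> complex) \<Rightarrow> complex" where
  "QF n f y = (\<Sum>a<n. \<Sum>b<n. y a * cnj (y b) * f (a*n+b))"

definition YA :: "nat \<Rightarrow> (nat \<Rightarrow> nat \<Rightarrow> nat \<Rightarrow> complex) \<Rightarrow> nat \<Rightarrow> (nat \<Rightarrow> complex) \<Rightarrow> nat \<Rightarrow> complex" where
  "YA n e \<alpha> y c = (\<Sum>a<n. y a * cnj (e \<alpha> a c))"

definition TT :: "nat \<Rightarrow> nat \<Rightarrow> (nat \<Rightarrow> nat \<Rightarrow> nat \<Rightarrow> complex) \<Rightarrow> complex mat" where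
  "TT m n e = mat (n*n) (n*n) (\<lambda>(i,j). \<Sum>\<alpha><m. cnj (e \<alpha> (i div n) (j div n)) * e \<alpha> (i mod n) (j mod n))"

definition Top :: "nat \<Rightarrow> complex mat \<Rightarrow> (nat \<Rightarrow> complex) \<Rightarrow> nat \<Rightarrow> complex" where
  "Top N M f i = (\<Sum>j<N. M $$ (i,j) * f j)"

lemma Top_pair:
  assumes "a < n" "b < n"
  shows "Top (n*n) (TT m n e) f (a*n+b) =
    (\<Sum>c<n. \<Sum>d<n. (\<Sum>\<alpha><m. cnj (e \<alpha> a c) * e \<alpha> b d) * f (c*n+d))"
proof -
  have n: "0 < n" using assms by auto
  have i: "a*n+b < n*n" using assms by (rule idx_lt)
  show ?thesis unfolding Top_def sum_pair
  proof (intro sum.cong refl)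
    fix c d assume c: "c \<in> {..<n}" and d: "d \<in> {..<n}"
    have j: "c*n+d < n*n" using c d by (intro idx_lt) auto
    show "TT m n e $$ (a * n + b, c * n + d) * f (c * n + d) =
         (\<Sum>\<alpha><m. cnj (e \<alpha> a c) * e \<alpha> b d) * f (c * n + d)"
      unfolding TT_def using i j assms c d by simp
  qed
qed

lemma swapE: "(\<Sum>a\<in>A. \<Sum>b\<in>B. \<Sum>c\<in>C. \<Sum>d\<in>D. \<Sum>x\<in>E. F a b c d x) =
  (\<Sum>x\<in>E. \<Sum>a\<in>A. \<Sum>b\<in>B. \<Sum>c\<in>C. \<Sum>d\<in>D. F a b c d x)"
  by (simp add: sum.swap[where B=E])

lemma swap22: "(\<Sum>c\<in>A. \<Sum>d\<in>B. \<Sum>a\<in>C. \<Sum>b\<in>D. G c d a b) =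
   (\<Sum>a\<in>C. \<Sum>b\<in>D. \<Sum>c\<in>A. \<Sum>d\<in>B. G c d a b)"
proof -
  have "(\<Sum>c\<in>A. \<Sum>d\<in>B. \<Sum>a\<in>C. \<Sum>b\<in>D. G c d a b) = (\<Sum>c\<in>A. \<Sum>a\<in>C. \<Sum>d\<in>B. \<Sum>b\<in>D. G c d a b)"
    by (rule sum.cong[OF refl], rule sum.swap)
  also have "\<dots> = (\<Sum>a\<in>C. \<Sum>c\<in>A. \<Sum>d\<in>B. \<Sum>b\<in>D. G c d a b)"
    by (rule sum.swap)
  also have "\<dots> = (\<Sum>a\<in>C. \<Sum>c\<in>A. \<Sum>b\<in>D. \<Sum>d\<in>B. G c d a b)"
    by (rule sum.cong[OF refl], rule sum.cong[OF refl], rule sum.swap)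
  also have "\<dots> = (\<Sum>a\<in>C. \<Sum>b\<in>D. \<Sum>c\<in>A. \<Sum>d\<in>B. G c d a b)"
    by (rule sum.cong[OF refl], rule sum.swap)
  finally show ?thesis .
qed

lemma TQ: "QF n (Top (n*n) (TT m n e) f) y = (\<Sum>\<alpha><m. QF n f (YA n e \<alpha> y))"
proof -
  have "QF n (Top (n*n) (TT m n e) f) y = (\<Sum>a<n. \<Sum>b<n. \<Sum>c<n. \<Sum>d<n. \<Sum>\<alpha><m.
      y a * cnj (y b) * (cnj (e \<alpha> a c) * e \<alpha> b d * f (c*n+d)))"
    unfolding QF_def by (intro sum.cong refl) (simp add: Top_pair sum_distrib_left sum_distrib_right)
  also have "\<dots> = (\<Sum>\<alpha><m. \<Sum>a<n. \<Sum>b<n. \<Sum>c<n. \<Sum>d<n.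
      y a * cnj (y b) * (cnj (e \<alpha> a c) * e \<alpha> b d * f (c*n+d)))"
    by (rule swapE)
  also have "\<dots> = (\<Sum>\<alpha><m. \<Sum>c<n. \<Sum>d<n. \<Sum>a<n. \<Sum>b<n.
      y a * cnj (y b) * (cnj (e \<alpha> a c) * e \<alpha> b d * f (c*n+d)))"
    by (rule sum.cong[OF refl], rule swap22[symmetric])
  also have "\<dots> = (\<Sum>\<alpha><m. \<Sum>c<n. \<Sum>d<n. \<Sum>b<n. \<Sum>a<n.
      y a * cnj (y b) * (cnj (e \<alpha> a c) * e \<alpha> b d * f (c*n+d)))"
    by (rule sum.cong[OF refl], rule sum.cong[OF refl], rule sum.cong[OF refl], rule sum.swap)
  also have "\<dots> = (\<Sum>\<alpha><m. QF n f (YA n e \<alpha> y))"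
    unfolding QF_def YA_def by (simp add: sum_distrib_left sum_distrib_right cnj_sum ac_simps)
  finally show ?thesis .
qed

lemma div_mod_idx: assumes "b < (n::nat)" shows "(a*n+b) div n = a" "(a*n+b) mod n = b"
  using assms by auto

lemma lower_part:
  fixes m n :: nat and e :: "nat \<Rightarrow> nat \<Rightarrow> nat \<Rightarrow> complex" and v :: "nat \<Rightarrow> complex"
  assumes m: "0 < m"
    and fx: "\<And>a. a < n \<Longrightarrow> (\<Sum>c<n. e 0 a c * v c) = v a"
  shows "nn (QF n ((Top (n*n) (TT m n e) ^^ k) (\<lambda>i. cnj (v (i div n)) * v (i mod n))) y
            - QF n (\<lambda>i. cnj (v (i div n)) * v (i mod n)) y)"
proof -
  define u where "u = (\<lambda>i. cnj (v (i div n)) * v (i mod n))"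
  define P where "P z = (\<Sum>b<n. cnj (z b) * v b)" for z
  have QU: "QF n u z = cnj (P z) * P z" for z
  proof -
    have "QF n u z = (\<Sum>a<n. \<Sum>b<n. (z a * cnj (v a)) * (cnj (z b) * v b))"
      unfolding QF_def u_def by (intro sum.cong refl) (simp add: div_mod_idx ac_simps)
    also have "\<dots> = cnj (P z) * P z"
      unfolding P_def by (simp add: cnj_sum sum_product)
    finally show ?thesis .
  qed
  have PY0: "P (YA n e 0 z) = P z" for z
  proof -
    have "P (YA n e 0 z) = (\<Sum>c<n. \<Sum>a<n. cnj (z a) * (e 0 a c * v c))"
      unfolding P_def YA_def by (simp add: cnj_sum sum_distrib_right sum_distrib_left ac_simps)
    also have "\<dots> = (\<Sum>a<n. cnj (z a) * (\<Sum>c<n. e 0 a c * v c))"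
      by (subst sum.swap) (simp add: sum_distrib_left)
    also have "\<dots> = P z" unfolding P_def by (intro sum.cong refl) (simp add: fx)
    finally show ?thesis .
  qed
  show ?thesis unfolding u_def[symmetric]
  proof (induction k arbitrary: y)
    case 0
    then show ?case by (simp add: nn_def)
  next
    case (Suc k)
    define g where "g = (Top (n*n) (TT m n e) ^^ k) u"
    have "QF n ((Top (n*n) (TT m n e) ^^ Suc k) u) y - QF n u y
       = (\<Sum>\<alpha><m. QF n g (YA n e \<alpha> y) - QF n u (YA n e \<alpha> y))
         + (\<Sum>\<alpha><m. QF n u (YA n e \<alpha> y) - (if \<alpha> = 0 then QF n u y else 0))"
      using m by (simp add: g_def TQ sum_subtractf)
    also have "nn \<dots>"
    proof (rule nn_add)
      show "nn (\<Sum>\<alpha><m. QF n g (YA n e \<alpha> y) - QF n u (YA n e \<alpha> y))"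
        using Suc.IH unfolding g_def by (intro nn_sum) auto
      show "nn (\<Sum>\<alpha><m. QF n u (YA n e \<alpha> y) - (if \<alpha> = 0 then QF n u y else 0))"
      proof (intro nn_sum)
        fix \<alpha> show "nn (QF n u (YA n e \<alpha> y) - (if \<alpha> = 0 then QF n u y else 0))"
          by (cases "\<alpha> = 0") (auto simp: QU PY0 nn_sq nn_def)
      qed
    qed
    finally show ?case .
  qed
qed

lemma powTop:
  assumes Tc: "T \<in> carrier_mat N N"
  shows "i < N \<Longrightarrow> (Top N T ^^ k) f i = (\<Sum>j<N. (T ^\<^sub>m k) $$ (i,j) * f j)"
proof (induction k arbitrary: f i)
  case 0
  have "(\<Sum>j<N. (if i = j then 1 else 0) * f j) = (\<Sum>j<N. if i = j then f j else 0)"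
    by (rule sum.cong) auto
  then show ?case using Tc 0 by (simp add: sum.delta)
next
  case (Suc k)
  have "(Top N T ^^ Suc k) f i = (Top N T ^^ k) (Top N T f) i"
    by (simp add: funpow_Suc_right del: funpow.simps)
  also have "\<dots> = (\<Sum>j<N. (T ^\<^sub>m k) $$ (i,j) * (\<Sum>l<N. T $$ (j,l) * f l))"
  proof -
    have "(Top N T ^^ k) (Top N T f) i = (\<Sum>j<N. (T ^\<^sub>m k) $$ (i,j) * Top N T f j)"
      by (rule Suc.IH[OF Suc.prems])
    then show ?thesis by (simp add: Top_def)
  qed
  also have "\<dots> = (\<Sum>l<N. (\<Sum>j<N. (T ^\<^sub>m k) $$ (i,j) * T $$ (j,l)) * f l)"
    by (simp add: sum_distrib_left sum_distrib_right ac_simps) (rule sum.swap)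
  also have "\<dots> = (\<Sum>l<N. (T ^\<^sub>m Suc k) $$ (i,l) * f l)"
    using Suc.prems Tc by (intro sum.cong refl) (simp add: scalar_prod_def atLeast0LessThan)
  finally show ?case .
qed

lemma Re_cnj_sq: "Re (cnj z * z) = (cmod z)^2"
proof -
  have "cnj z * z = of_real ((cmod z)^2)" using complex_norm_square[of z] by (simp add: mult.commute)
  thus ?thesis by simp
qed

lemma powS: fixes r :: complex assumes Tc: "T \<in> carrier_mat N N"
  shows "(r \<cdot>\<^sub>m T) ^\<^sub>m k = (r^k) \<cdot>\<^sub>m (T ^\<^sub>m k)"
proof (induction k)
  case 0
  then show ?case using Tc by (auto intro!: eq_matI)
next
  case (Suc k)
  have "(r \<cdot>\<^sub>m T) ^\<^sub>m Suc k = ((r^k) \<cdot>\<^sub>m (T ^\<^sub>m k)) * (r \<cdot>\<^sub>m T)"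
    using Suc by simp
  also have "\<dots> = (r^Suc k) \<cdot>\<^sub>m (T ^\<^sub>m Suc k)"
  proof -
    have "((r^k) \<cdot>\<^sub>m (T ^\<^sub>m k)) * (r \<cdot>\<^sub>m T) = (r^k) \<cdot>\<^sub>m ((T ^\<^sub>m k) * (r \<cdot>\<^sub>m T))"
      by (rule mult_smult_assoc_mat) (use Tc in auto)
    also have "\<dots> = (r^k) \<cdot>\<^sub>m (r \<cdot>\<^sub>m ((T ^\<^sub>m k) * T))"
      by (subst mult_smult_distrib[of _ N N _ N]) (use Tc in auto)
    also have "\<dots> = (r^Suc k) \<cdot>\<^sub>m (T ^\<^sub>m Suc k)"
      by (rule eq_matI) (auto simp: ac_simps)
    finally show ?thesis .
  qed
  finally show ?case .
qed

lemma no_fix: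
  fixes m n :: nat and e :: "nat \<Rightarrow> nat \<Rightarrow> nat \<Rightarrow> complex" and v :: "nat \<Rightarrow> complex"
  assumes m: "0 < m"
    and fd: "\<And>ev. eigenvalue (TT m n e) ev \<Longrightarrow> cmod ev < 1"
    and fx: "\<And>a. a < n \<Longrightarrow> (\<Sum>c<n. e 0 a c * v c) = v a"
    and a0: "a0 < n" and nz: "v a0 \<noteq> 0"
  shows False
proof -
  define N where "N = n*n"
  define T where "T = TT m n e"
  have Tc: "T \<in> carrier_mat N N" unfolding T_def TT_def N_def by simp
  have N0: "0 < N" using a0 unfolding N_def by simp
  define u where "u = (\<lambda>i. cnj (v (i div n)) * v (i mod n))"
  define g where "g k = (Top N T ^^ k) u" for k
  define P where "P = (\<Sum>b<n. cnj (v b) * v b)"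
  have QUv: "QF n u v = cnj P * P"
  proof -
    have "QF n u v = (\<Sum>a<n. \<Sum>b<n. (v a * cnj (v a)) * (cnj (v b) * v b))"
      unfolding QF_def u_def by (intro sum.cong refl) (simp add: div_mod_idx ac_simps)
    also have "\<dots> = cnj P * P"
      unfolding P_def by (simp add: cnj_sum sum_product ac_simps)
    finally show ?thesis .
  qed
  have ReP: "Re P = (\<Sum>b<n. (cmod (v b))^2)"
    unfolding P_def Re_sum by (intro sum.cong refl) (rule Re_cnj_sq)
  have "(cmod (v a0))^2 \<le> (\<Sum>b<n. (cmod (v b))^2)"
    by (rule member_le_sum) (use a0 in auto)
  moreover have "0 < (cmod (v a0))^2" using nz by simp
  ultimately have "P \<noteq> 0" using ReP by auto
  define \<beta> where "\<beta> = Re (QF n u v)"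
  have \<beta>: "0 < \<beta>" unfolding \<beta>_def QUv Re_cnj_sq using \<open>P \<noteq> 0\<close> by simp
  have low: "\<beta> \<le> cmod (QF n (g k) v)" for k
  proof -
    have "nn (QF n (g k) v - QF n u v)"
      using lower_part[of m n e v k v, OF m fx] unfolding g_def u_def N_def T_def .
    hence "\<beta> \<le> Re (QF n (g k) v)" unfolding nn_def \<beta>_def by simp
    also have "\<dots> \<le> cmod (QF n (g k) v)" by (rule complex_Re_le_cmod)
    finally show ?thesis .
  qed
  define \<rho> where "\<rho> = spectral_radius T"
  from spectral_radius_mem_max(1)[OF Tc N0] obtain ev where ev: "eigenvalue T ev" and "\<rho> = cmod ev"
    unfolding \<rho>_def spectrum_def by auto
  with fd have \<rho>1: "\<rho> < 1" unfolding T_def by auto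
  have \<rho>0: "0 \<le> \<rho>" using \<open>\<rho> = cmod ev\<close> by simp
  define r where "r = 2 / (1 + \<rho>)"
  have r1: "1 < r" unfolding r_def using \<rho>0 \<rho>1 by (simp add: field_simps)
  have r\<rho>: "r * \<rho> < 1" unfolding r_def using \<rho>0 \<rho>1 by (simp add: field_simps)
  define S where "S = complex_of_real r \<cdot>\<^sub>m T"
  have Sc: "S \<in> carrier_mat N N" unfolding S_def using Tc by simp
  have "spectral_radius S < 1"
  proof -
    from spectral_radius_mem_max(1)[OF Sc N0] obtain ev' where ev': "eigenvalue S ev'"
      and eq: "spectral_radius S = cmod ev'" unfolding spectrum_def by auto
    from ev' obtain w where w: "w \<in> carrier_vec N" "w \<noteq> 0\<^sub>v N" "S *\<^sub>v w = ev' \<cdot>\<^sub>v w"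
      unfolding eigenvalue_def eigenvector_def using Sc by auto
    have "T *\<^sub>v w = (ev' / complex_of_real r) \<cdot>\<^sub>v w"
    proof (rule eq_vecI)
      fix i assume i: "i < dim_vec ((ev' / complex_of_real r) \<cdot>\<^sub>v w)"
      have "(S *\<^sub>v w) $ i = complex_of_real r * (T *\<^sub>v w) $ i"
        using i w(1) Tc unfolding S_def by (simp add: scalar_prod_def sum_distrib_left ac_simps)
      with w(3) have "complex_of_real r * (T *\<^sub>v w) $ i = ev' * w $ i" using i by simp
      thus "(T *\<^sub>v w) $ i = ((ev' / complex_of_real r) \<cdot>\<^sub>v w) $ i"
        using i r1 by (simp add: field_simps)
    qed (use w Tc in simp)
    hence "eigenvalue T (ev' / complex_of_real r)"
      unfolding eigenvalue_def eigenvector_def using w Tc by auto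
    hence "cmod (ev' / complex_of_real r) \<le> \<rho>"
      unfolding \<rho>_def by (intro spectral_radius_mem_max(2)[OF Tc N0]) (auto simp: spectrum_def)
    hence "cmod ev' \<le> r * \<rho>" using r1 by (simp add: norm_divide field_simps)
    thus ?thesis using eq r\<rho> by simp
  qed
  from spectral_radius_jnf_norm_bound_less_1_upper_triangular[OF Sc this]
  obtain c where c: "\<And>k. norm_bound (S ^\<^sub>m k) c" by auto
  have Tk: "cmod ((T ^\<^sub>m k) $$ (i,j)) \<le> c / r^k" if "i < N" "j < N" for i j k
  proof -
    have "cmod ((S ^\<^sub>m k) $$ (i,j)) \<le> c" using c[of k] that Sc unfolding norm_bound_def by auto
    moreover have "(S ^\<^sub>m k) $$ (i,j) = complex_of_real r ^ k * (T ^\<^sub>m k) $$ (i,j)"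
      unfolding S_def powS[OF Tc] using that Tc by simp
    ultimately have "r^k * cmod ((T ^\<^sub>m k) $$ (i,j)) \<le> c" using r1 by (simp add: norm_mult norm_power)
    thus ?thesis using r1 by (simp add: field_simps)
  qed
  define U where "U = (\<Sum>j<N. cmod (u j))"
  define V where "V = (\<Sum>a<n. \<Sum>b<n. cmod (v a) * cmod (v b))"
  have gk: "cmod (g k i) \<le> c / r^k * U" if "i < N" for i k
  proof -
    have "cmod (g k i) = cmod (\<Sum>j<N. (T ^\<^sub>m k) $$ (i,j) * u j)"
      unfolding g_def using powTop[OF Tc that] by simp
    also have "\<dots> \<le> (\<Sum>j<N. cmod ((T ^\<^sub>m k) $$ (i,j)) * cmod (u j))"
      by (rule order.trans[OF norm_sum]) (simp add: norm_mult)
    also have "\<dots> \<le> (\<Sum>j<N. c / r^k * cmod (u j))"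
      by (intro sum_mono mult_right_mono Tk that) auto
    finally show ?thesis unfolding U_def by (simp add: sum_distrib_left)
  qed
  have up: "cmod (QF n (g k) v) \<le> c / r^k * U * V" for k
  proof -
    have "cmod (QF n (g k) v) \<le> (\<Sum>a<n. \<Sum>b<n. cmod (v a) * cmod (v b) * cmod (g k (a*n+b)))"
      unfolding QF_def
      by (rule order.trans[OF norm_sum], rule sum_mono, rule order.trans[OF norm_sum])
         (simp add: norm_mult)
    also have "\<dots> \<le> (\<Sum>a<n. \<Sum>b<n. cmod (v a) * cmod (v b) * (c / r^k * U))"
      by (intro sum_mono mult_left_mono gk) (auto simp: N_def intro: idx_lt)
    also have "\<dots> = c / r^k * U * V" unfolding V_def
      by (simp add: sum_distrib_left sum_divide_distrib[symmetric] mult.commute)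
    finally show ?thesis .
  qed
  obtain k where k: "c * U * V / \<beta> < r^k" using real_arch_pow[OF r1] by blast
  have "\<beta> \<le> c / r^k * U * V" using low[of k] up[of k] by linarith
  hence "\<beta> * r^k \<le> c * U * V" using r1 by (simp add: field_simps)
  with k \<beta> show False by (simp add: field_simps)
qed

lemma split3: fixes n :: nat shows "(\<Sum>k<n+2. F k) = F 0 + (\<Sum>k<n. F (k+1)) + (F (n+1) :: 'a::comm_monoid_add)"
proof -
  have "(\<Sum>k<n+2. F k) = (\<Sum>k<Suc (Suc n). F k)" by simp
  also have "\<dots> = (\<Sum>k<Suc n. F k) + F (Suc n)" by simp
  also have "(\<Sum>k<Suc n. F k) = F 0 + (\<Sum>k<n. F (Suc k))" by (rule sum.lessThan_Suc_shift)
  finally show ?thesis by simp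
qed

lemma delta_shift: fixes i n :: nat assumes "1 \<le> i" "i \<le> n"
  shows "(\<Sum>k<n. (if i = k+1 then 1 else 0) * (f (k+1) :: complex)) = f i"
proof -
  have "(\<Sum>k<n. (if i = k+1 then 1 else 0) * f (k+1)) = (\<Sum>k<n. if k = i - 1 then f i else 0)"
    using assms by (intro sum.cong refl) auto
  also have "\<dots> = f i" using assms by (simp add: sum.delta)
  finally show ?thesis .
qed

lemma RL: assumes "i < n+2"
  shows "(\<Sum>k<n+2. L_mat n t s $$ (i,k) * f k) =
    (if i = 0 then f 0 + (\<Sum>k<n. t k * f (k+1)) else if i \<le> n then f i + s (i-1) * f (n+1) else f (n+1))"
proof -
  have e: "(\<Sum>k<n+2. L_mat n t s $$ (i,k) * f k) = L_mat n t s $$ (i,0) * f 0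
     + (\<Sum>k<n. L_mat n t s $$ (i,k+1) * f (k+1)) + L_mat n t s $$ (i,n+1) * f (n+1)"
    by (rule split3)
  show ?thesis
  proof (cases "i = 0")
    case True
    then show ?thesis unfolding e by (simp add: L_mat_def)
  next
    case False
    show ?thesis
    proof (cases "i \<le> n")
      case True
      have "(\<Sum>k<n. L_mat n t s $$ (i,k+1) * f (k+1)) = (\<Sum>k<n. (if i = k+1 then 1 else 0) * f (k+1))"
        using True False assms by (intro sum.cong refl) (auto simp: L_mat_def)
      also have "\<dots> = f i" using True False by (intro delta_shift) auto
      finally show ?thesis unfolding e using True False assms by (simp add: L_mat_def)
    next
      case F2: False
      then have "i = n+1" using assms by simp
      then show ?thesis unfolding e by (simp add: L_mat_def)
    qed
  qed
qed

definition Li_mat :: "nat \<Rightarrow> (nat \<Rightarrow> complex) \<Rightarrow> (nat \<Rightarrow> complex) \<Rightarrow> complex mat" where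
  "Li_mat n t s = mat (n+2) (n+2) (\<lambda>(i,j).
      if i = j then 1
      else if i = 0 \<and> 1 \<le> j \<and> j \<le> n then - t (j - 1)
      else if 1 \<le> i \<and> i \<le> n \<and> j = n+1 then - s (i - 1)
      else if i = 0 \<and> j = n+1 then (\<Sum>k<n. t k * s k)
      else 0)"

lemma delta_shift2: fixes i n :: nat assumes "1 \<le> i" "i \<le> n"
  shows "(\<Sum>k<n. (f (k+1) :: complex) * (if k+1 = i then 1 else 0)) = f i"
proof -
  have "(\<Sum>k<n. f (k+1) * (if k+1 = i then 1 else 0)) = (\<Sum>k<n. if k = i - 1 then f i else 0)"
    using assms by (intro sum.cong refl) auto
  also have "\<dots> = f i" using assms by (simp add: sum.delta)
  finally show ?thesis .
qed

lemma CLi: assumes "j < n+2"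
  shows "(\<Sum>l<n+2. g l * Li_mat n t s $$ (l,j)) =
    (if j = 0 then g 0 else if j \<le> n then g j - t (j-1) * g 0
     else g (n+1) - (\<Sum>l<n. s l * g (l+1)) + (\<Sum>k<n. t k * s k) * g 0)"
proof -
  have e: "(\<Sum>l<n+2. g l * Li_mat n t s $$ (l,j)) = g 0 * Li_mat n t s $$ (0,j)
     + (\<Sum>l<n. g (l+1) * Li_mat n t s $$ (l+1,j)) + g (n+1) * Li_mat n t s $$ (n+1,j)"
    by (rule split3)
  show ?thesis
  proof (cases "j = 0")
    case True
    then show ?thesis unfolding e by (simp add: Li_mat_def)
  next
    case False
    show ?thesis
    proof (cases "j \<le> n")
      case True
      have "(\<Sum>l<n. g (l+1) * Li_mat n t s $$ (l+1,j)) = (\<Sum>l<n. g (l+1) * (if l+1 = j then 1 else 0))"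
        using True False assms by (intro sum.cong refl) (auto simp: Li_mat_def)
      also have "\<dots> = g j" using True False by (intro delta_shift2) auto
      finally show ?thesis unfolding e using True False assms by (simp add: Li_mat_def)
    next
      case F2: False
      then have j: "j = n+1" using assms by simp
      have "(\<Sum>l<n. g (l+1) * Li_mat n t s $$ (l+1,j)) = (\<Sum>l<n. - (s l * g (l+1)))"
        using j by (intro sum.cong refl) (auto simp: Li_mat_def)
      then show ?thesis unfolding e using j by (simp add: Li_mat_def sum_negf)
    qed
  qed
qed

lemma L_Li: "L_mat n t s * Li_mat n t s = 1\<^sub>m (n+2)"
proof (rule eq_matI)
  fix i j assume i: "i < dim_row (1\<^sub>m (n+2) :: complex mat)" and j: "j < dim_col (1\<^sub>m (n+2) :: complex mat)"
  have "(L_mat n t s * Li_mat n t s) $$ (i,j) = (\<Sum>k<n+2. L_mat n t s $$ (i,k) * Li_mat n t s $$ (k,j))"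
    using i j by (simp add: L_mat_def Li_mat_def scalar_prod_def atLeast0LessThan)
  also have "\<dots> = 1\<^sub>m (n+2) $$ (i,j)"
  proof -
    have ij: "i < n+2" "j < n+2" using i j by auto
    have s1: "(\<Sum>k<n. t k * Li_mat n t s $$ (k+1, j)) =
       (if j = 0 then 0 else if j \<le> n then t (j-1) else - (\<Sum>k<n. t k * s k))"
    proof (cases "j = 0")
      case True then show ?thesis by (simp add: Li_mat_def)
    next
      case False
      show ?thesis
      proof (cases "j \<le> n")
        case True
        have "(\<Sum>k<n. t k * Li_mat n t s $$ (k+1, j)) = (\<Sum>k<n. (if j = k+1 then 1 else 0) * t (k+1-1))"
          using True False ij by (intro sum.cong refl) (auto simp: Li_mat_def)
        also have "\<dots> = t (j-1)" using True False delta_shift[of j n "\<lambda>k. t (k-1)"] by simp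
        finally show ?thesis using True False by simp
      next
        case F2: False
        then have "j = n+1" using ij by simp
        then show ?thesis by (simp add: Li_mat_def sum_negf)
      qed
    qed
    show ?thesis unfolding RL[OF ij(1)] s1 using ij
      by (auto simp: Li_mat_def)
  qed
  finally show "(L_mat n t s * Li_mat n t s) $$ (i,j) = 1\<^sub>m (n+2) $$ (i,j)" .
qed (auto simp: L_mat_def Li_mat_def)

lemma TT_transfer:
  "transfer_mat q Ob n (mid_block n W) = TT (q^2) n (\<lambda>\<alpha> a c. op_inner q (Ob \<alpha>) (W (a+1) (c+1)))"
proof (rule eq_matI)
  fix i j assume i: "i < dim_row (TT (q^2) n (\<lambda>\<alpha> a c. op_inner q (Ob \<alpha>) (W (a+1) (c+1))))"
    and j: "j < dim_col (TT (q^2) n (\<lambda>\<alpha> a c. op_inner q (Ob \<alpha>) (W (a+1) (c+1))))"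
  from i j have i': "i < n*n" and j': "j < n*n" by (auto simp: TT_def)
  have n: "0 < n" using i' by (cases n) auto
  have d: "i div n < n" "j div n < n" "i mod n < n" "j mod n < n"
    using i' j' n by (auto simp: less_mult_imp_div_less)
  show "transfer_mat q Ob n (mid_block n W) $$ (i, j) = TT (q^2) n (\<lambda>\<alpha> a c. op_inner q (Ob \<alpha>) (W (a+1) (c+1))) $$ (i, j)"
    using i' j' d by (simp add: transfer_mat_def TT_def kron_def conj_mat_def comp_mat_def mid_block_def)
qed (auto simp: transfer_mat_def TT_def)

lemma oi1: assumes "X \<in> carrier_mat q q"
  shows "op_inner q (1\<^sub>m q) X = (\<Sum>x<q. X $$ (x,x)) / of_nat q"
proof -
  have "op_adj (1\<^sub>m q) = (1\<^sub>m q :: complex mat)"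
    by (rule eq_matI) (auto simp: op_adj_def)
  then show ?thesis using assms unfolding op_inner_def op_trace_def by simp
qed

theorem lemma4:
  fixes q \<chi> :: nat and Ob :: "nat \<Rightarrow> complex mat" and W :: "nat \<Rightarrow> nat \<Rightarrow> complex mat"
  assumes "q \<ge> 1"
    and "ortho_basis q Ob"
    and "regular_form q \<chi> W"
    and "first_degree q Ob \<chi> W"
  shows "\<exists>t s :: nat \<Rightarrow> complex. \<forall>Linv. L_mat \<chi> t s * Linv = 1\<^sub>m (\<chi>+2) \<and> Linv \<in> carrier_mat (\<chi>+2) (\<chi>+2) \<longrightarrow>
     (let W' = sandwich q (\<chi>+2) (L_mat \<chi> t s) W Linv;
          W0' = comp_mat q (1\<^sub>m q) (\<chi>+2) W'
      in (\<forall>i\<le>\<chi>+1. \<forall>j\<le>\<chi>+1. \<not> (i = 0 \<and> j = \<chi>+1) \<longrightarrow>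
            W0' $$ (i,j) =
              (if 1 \<le> i \<and> i \<le> \<chi> \<and> 1 \<le> j \<and> j \<le> \<chi>
               then op_inner q (1\<^sub>m q) (W i j)
               else if i = j then 1 else 0))
       \<and> (\<forall>a<\<chi>. \<forall>b<\<chi>. mid_block \<chi> W' a b = mid_block \<chi> W a b))"
proof -
  have q: "1 \<le> q" by fact
  have carr: "\<And>i j. i \<le> \<chi>+1 \<Longrightarrow> j \<le> \<chi>+1 \<Longrightarrow> W i j \<in> carrier_mat q q"
    and W00: "W 0 0 = 1\<^sub>m q" and Wnn: "W (\<chi>+1) (\<chi>+1) = 1\<^sub>m q"
    and Wc0: "\<And>i. 1 \<le> i \<Longrightarrow> i \<le> \<chi>+1 \<Longrightarrow> W i 0 = 0\<^sub>m q q"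
    and Wlr: "\<And>j. j \<le> \<chi> \<Longrightarrow> W (\<chi>+1) j = 0\<^sub>m q q"
    using assms(3) unfolding regular_form_def by auto
  have Ob0: "Ob 0 = 1\<^sub>m q" using assms(2) unfolding ortho_basis_def by auto
  define w where "w k l = op_inner q (1\<^sub>m q) (W k l)" for k l
  have wtr: "w k l = (\<Sum>x<q. W k l $$ (x,x)) / of_nat q" if "k \<le> \<chi>+1" "l \<le> \<chi>+1" for k l
    unfolding w_def using carr[OF that] by (rule oi1)
  have w00: "w 0 0 = 1" using wtr[of 0 0] q by (simp add: W00)
  have wnn: "w (\<chi>+1) (\<chi>+1) = 1" using wtr[of "\<chi>+1" "\<chi>+1"] q Wnn by simp
  have wc0: "w i 0 = 0" if "1 \<le> i" "i \<le> \<chi>+1" for i using wtr[of i 0] that Wc0[OF that] by simp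
  have wlr: "w (\<chi>+1) j = 0" if "j \<le> \<chi>" for j using wtr[of "\<chi>+1" j] that Wlr[OF that] by simp
  define e where "e \<alpha> a c = op_inner q (Ob \<alpha>) (W (a+1) (c+1))" for \<alpha> a c
  define A0 where "A0 = mat \<chi> \<chi> (\<lambda>(a,b). w (a+1) (b+1))"
  define M where "M = 1\<^sub>m \<chi> - A0"
  have Mc: "M \<in> carrier_mat \<chi> \<chi>" unfolding M_def A0_def by (intro minus_carrier_mat) auto
  have Ment: "M $$ (a,b) = (if a = b then 1 else 0) - w (a+1) (b+1)" if "a < \<chi>" "b < \<chi>" for a b
    using that unfolding M_def A0_def by (simp add: minus_mat_def)
  have detM: "det M \<noteq> 0"
  proof
    assume "det M = 0"
    then obtain v where v: "v \<in> carrier_vec \<chi>" "v \<noteq> 0\<^sub>v \<chi>" "M *\<^sub>v v = 0\<^sub>v \<chi>"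
      using det_0_iff_vec_prod_zero[OF Mc] by auto
    obtain a0 where a0: "a0 < \<chi>" "v $ a0 \<noteq> 0"
    proof (rule ccontr)
      assume "\<not> thesis"
      with that have "\<And>a. a < \<chi> \<Longrightarrow> v $ a = 0" by blast
      hence "v = 0\<^sub>v \<chi>" using v(1) by (intro eq_vecI) auto
      with v(2) show False by simp
    qed
    have fx: "(\<Sum>c<\<chi>. e 0 a c * v $ c) = v $ a" if a: "a < \<chi>" for a
    proof -
      have "0 = (M *\<^sub>v v) $ a" using v(3) a by simp
      also have "\<dots> = (\<Sum>c<\<chi>. M $$ (a,c) * v $ c)"
        using a Mc v(1) by (simp add: scalar_prod_def atLeast0LessThan)
      also have "\<dots> = (\<Sum>c<\<chi>. (if a = c then v $ c else 0) - w (a+1) (c+1) * v $ c)"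
        using a by (intro sum.cong refl) (simp add: Ment left_diff_distrib)
      also have "\<dots> = v $ a - (\<Sum>c<\<chi>. e 0 a c * v $ c)"
        using a by (simp add: sum_subtractf e_def Ob0 w_def)
      finally show ?thesis by simp
    qed
    have fd: "cmod ev < 1" if "eigenvalue (TT (q^2) \<chi> e) ev" for ev
      using assms(4) that unfolding first_degree_def TT_transfer e_def by auto
    show False
      using no_fix[of "q^2" \<chi> e "\<lambda>i. v $ i" a0] fd fx a0 q by auto
  qed
  from det_non_zero_imp_unit[OF Mc detM, of undefined]
  obtain B where Bc: "B \<in> carrier_mat \<chi> \<chi>" and BM: "B * M = 1\<^sub>m \<chi>" and MB: "M * B = 1\<^sub>m \<chi>"
    unfolding Units_def ring_mat_def by auto
  define c0 where "c0 j = w 0 (j+1)" for j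
  define b0 where "b0 j = w (j+1) (\<chi>+1)" for j
  define t where "t k = (\<Sum>j<\<chi>. c0 j * B $$ (j,k))" for k
  define s where "s k = - (\<Sum>j<\<chi>. B $$ (k,j) * b0 j)" for k
  have teq: "t j - (\<Sum>k<\<chi>. t k * w (k+1) (j+1)) = c0 j" if j: "j < \<chi>" for j
  proof -
    have "(\<Sum>k<\<chi>. t k * M $$ (k,j)) = (\<Sum>k<\<chi>. (if k = j then t k else 0) - t k * w (k+1) (j+1))"
      using j by (intro sum.cong refl) (simp add: Ment right_diff_distrib)
    also have "\<dots> = t j - (\<Sum>k<\<chi>. t k * w (k+1) (j+1))"
      using j by (simp add: sum_subtractf sum.delta')
    finally have "t j - (\<Sum>k<\<chi>. t k * w (k+1) (j+1)) = (\<Sum>k<\<chi>. t k * M $$ (k,j))" by simp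
    also have "\<dots> = (\<Sum>i<\<chi>. c0 i * (\<Sum>k<\<chi>. B $$ (i,k) * M $$ (k,j)))"
      unfolding t_def by (simp add: sum_distrib_left sum_distrib_right ac_simps) (rule sum.swap)
    also have "\<dots> = (\<Sum>i<\<chi>. c0 i * (B * M) $$ (i,j))"
      using j Bc Mc by (intro sum.cong refl) (simp add: scalar_prod_def atLeast0LessThan)
    also have "\<dots> = (\<Sum>i<\<chi>. if i = j then c0 i else 0)"
      using j by (intro sum.cong refl) (simp add: BM)
    also have "\<dots> = c0 j" using j by (simp add: sum.delta')
    finally show ?thesis .
  qed
  have seq: "s i - (\<Sum>k<\<chi>. w (i+1) (k+1) * s k) = - b0 i" if i: "i < \<chi>" for i
  proof -
    have "(\<Sum>k<\<chi>. M $$ (i,k) * s k) = (\<Sum>k<\<chi>. (if i = k then s k else 0) - w (i+1) (k+1) * s k)"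
      using i by (intro sum.cong refl) (simp add: Ment left_diff_distrib)
    also have "\<dots> = s i - (\<Sum>k<\<chi>. w (i+1) (k+1) * s k)"
      using i by (simp add: sum_subtractf sum.delta)
    finally have "s i - (\<Sum>k<\<chi>. w (i+1) (k+1) * s k) = (\<Sum>k<\<chi>. M $$ (i,k) * s k)" by simp
    also have "\<dots> = - (\<Sum>j<\<chi>. (\<Sum>k<\<chi>. M $$ (i,k) * B $$ (k,j)) * b0 j)"
      unfolding s_def by (simp add: sum_distrib_left sum_distrib_right sum_negf ac_simps) (rule sum.swap)
    also have "\<dots> = - (\<Sum>j<\<chi>. (M * B) $$ (i,j) * b0 j)"
      using i Bc Mc by (simp add: scalar_prod_def atLeast0LessThan)
    also have "(\<Sum>j<\<chi>. (M * B) $$ (i,j) * b0 j) = (\<Sum>j<\<chi>. if i = j then b0 j else 0)"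
      using i by (intro sum.cong refl) (simp add: MB)
    also have "\<dots> = b0 i" using i by (simp add: sum.delta)
    finally show ?thesis .
  qed
  show ?thesis
  proof (intro exI allI impI)
    fix Linv assume H: "L_mat \<chi> t s * Linv = 1\<^sub>m (\<chi>+2) \<and> Linv \<in> carrier_mat (\<chi>+2) (\<chi>+2)"
    define L where "L = L_mat \<chi> t s"
    define Li where "Li = Li_mat \<chi> t s"
    have Lc: "L \<in> carrier_mat (\<chi>+2) (\<chi>+2)" unfolding L_def L_mat_def by simp
    have Lic: "Li \<in> carrier_mat (\<chi>+2) (\<chi>+2)" unfolding Li_def Li_mat_def by simp
    have LiL: "Li * L = 1\<^sub>m (\<chi>+2)"
      using mat_mult_left_right_inverse[OF Lc Lic] L_Li unfolding L_def Li_def by auto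
    have "Linv = (Li * L) * Linv" unfolding LiL using H by (intro left_mult_one_mat[symmetric]) auto
    also have "\<dots> = Li * (L * Linv)" using H Lc Lic by (intro assoc_mult_mat[of _ "\<chi>+2" "\<chi>+2" _ "\<chi>+2" _ "\<chi>+2"]) auto
    also have "\<dots> = Li" using H Lic unfolding L_def by simp
    finally have Linv: "Linv = Li" .
    define W' where "W' = sandwich q (\<chi>+2) L W Li"
    have W'ent: "W' i j $$ (x,y) = (\<Sum>k<\<chi>+2. L $$ (i,k) * (\<Sum>l<\<chi>+2. W k l $$ (x,y) * Li $$ (l,j)))"
      if "x < q" "y < q" for i j x y
      unfolding W'_def sandwich_def
      by (subst index_mat(1)[OF that]) (simp only: prod.case sum_distrib_left mult.assoc)
    have W'c: "W' i j \<in> carrier_mat q q" for i j unfolding W'_def sandwich_def by simp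
    have W0ent: "op_inner q (1\<^sub>m q) (W' i j) = (\<Sum>k<\<chi>+2. L $$ (i,k) * (\<Sum>l<\<chi>+2. w k l * Li $$ (l,j)))" for i j
    proof -
      have "op_inner q (1\<^sub>m q) (W' i j) = (\<Sum>x<q. W' i j $$ (x,x)) / of_nat q" by (rule oi1[OF W'c])
      also have "(\<Sum>x<q. W' i j $$ (x,x)) = (\<Sum>x<q. \<Sum>k<\<chi>+2. \<Sum>l<\<chi>+2. L $$ (i,k) * (W k l $$ (x,x) * Li $$ (l,j)))"
        by (rule sum.cong[OF refl]) (simp add: W'ent sum_distrib_left del: sum.lessThan_Suc)
      also have "\<dots> = (\<Sum>k<\<chi>+2. \<Sum>x<q. \<Sum>l<\<chi>+2. L $$ (i,k) * (W k l $$ (x,x) * Li $$ (l,j)))"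
        by (rule sum.swap)
      also have "\<dots> = (\<Sum>k<\<chi>+2. \<Sum>l<\<chi>+2. \<Sum>x<q. L $$ (i,k) * (W k l $$ (x,x) * Li $$ (l,j)))"
        by (rule sum.cong[OF refl], rule sum.swap)
      also have "\<dots> / of_nat q = (\<Sum>k<\<chi>+2. \<Sum>l<\<chi>+2. (\<Sum>x<q. L $$ (i,k) * (W k l $$ (x,x) * Li $$ (l,j))) / of_nat q)"
        by (simp only: sum_divide_distrib)
      also have "\<dots> = (\<Sum>k<\<chi>+2. \<Sum>l<\<chi>+2. L $$ (i,k) * (w k l * Li $$ (l,j)))"
      proof (intro sum.cong refl)
        fix k l assume k: "k \<in> {..<\<chi>+2}" and l: "l \<in> {..<\<chi>+2}"
        have "(\<Sum>x<q. L $$ (i,k) * (W k l $$ (x,x) * Li $$ (l,j))) = L $$ (i,k) * ((\<Sum>x<q. W k l $$ (x,x)) * Li $$ (l,j))"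
          by (simp add: sum_distrib_left sum_distrib_right)
        then show "(\<Sum>x<q. L $$ (i,k) * (W k l $$ (x,x) * Li $$ (l,j))) / of_nat q = L $$ (i,k) * (w k l * Li $$ (l,j))"
          using k l wtr[of k l] by simp
      qed
      also have "\<dots> = (\<Sum>k<\<chi>+2. L $$ (i,k) * (\<Sum>l<\<chi>+2. w k l * Li $$ (l,j)))"
        by (simp only: sum_distrib_left)
      finally show ?thesis .
    qed
    show "let W' = sandwich q (\<chi>+2) (L_mat \<chi> t s) W Linv; W0' = comp_mat q (1\<^sub>m q) (\<chi>+2) W'
      in (\<forall>i\<le>\<chi>+1. \<forall>j\<le>\<chi>+1. \<not> (i = 0 \<and> j = \<chi>+1) \<longrightarrow>
            W0' $$ (i,j) =
              (if 1 \<le> i \<and> i \<le> \<chi> \<and> 1 \<le> j \<and> j \<le> \<chi>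
               then op_inner q (1\<^sub>m q) (W i j)
               else if i = j then 1 else 0))
       \<and> (\<forall>a<\<chi>. \<forall>b<\<chi>. mid_block \<chi> W' a b = mid_block \<chi> W a b)"
      unfolding Let_def Linv L_def[symmetric] W'_def[symmetric]
    proof (intro conjI allI impI)
      fix a b assume a: "a < \<chi>" and b: "b < \<chi>"
      show "mid_block \<chi> W' a b = mid_block \<chi> W a b"
        unfolding mid_block_def
      proof (rule eq_matI)
        fix x y assume x: "x < dim_row (W (a+1) (b+1))" and y: "y < dim_col (W (a+1) (b+1))"
        have xy: "x < q" "y < q" using x y carr[of "a+1" "b+1"] a b by auto
        show "W' (a+1) (b+1) $$ (x,y) = W (a+1) (b+1) $$ (x,y)"
        proof -
          have ia: "a+1 < \<chi>+2" and jb: "b+1 < \<chi>+2" using a b by auto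
          show ?thesis
            unfolding W'ent[OF xy] L_def Li_def
            using a b xy Wlr[of "b+1"] Wc0[of "\<chi>+1"] Wc0[of "a+1"]
            by (simp only: RL[OF ia] CLi[OF jb]) simp
        qed
      qed (use W'c carr[of "a+1" "b+1"] a b in auto)
    next
      fix i j assume i: "i \<le> \<chi>+1" and j: "j \<le> \<chi>+1" and nc: "\<not> (i = 0 \<and> j = \<chi>+1)"
      have ij: "i < \<chi>+2" "j < \<chi>+2" using i j by auto
      show "comp_mat q (1\<^sub>m q) (\<chi>+2) W' $$ (i,j) =
         (if 1 \<le> i \<and> i \<le> \<chi> \<and> 1 \<le> j \<and> j \<le> \<chi> then op_inner q (1\<^sub>m q) (W i j) else if i = j then 1 else 0)"
      proof -
        have S1: "(\<Sum>k<\<chi>. t k * w (Suc k) 0) = 0" by (rule sum.neutral) (auto simp: wc0)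
        have wlr': "j' \<le> \<chi> \<Longrightarrow> w (Suc \<chi>) j' = 0" for j' using wlr by simp
        have S2: "(\<Sum>l<\<chi>. s l * w (Suc \<chi>) (Suc l)) = 0" by (rule sum.neutral) (auto simp: wlr')
        have S3: "(\<Sum>k<\<chi>. t k * (g k - c * w (Suc k) 0)) = (\<Sum>k<\<chi>. t k * g k)" for g c
          by (intro sum.cong refl) (auto simp: wc0)
        have wc0': "w (Suc \<chi>) 0 = 0" using wc0[of "\<chi>+1"] by simp
        have wnn': "w (Suc \<chi>) (Suc \<chi>) = 1" using wnn by simp
        have wk0: "w (Suc k) 0 = 0" if "k < \<chi>" for k using wc0[of "Suc k"] that by simp
        have wi0: "w i' 0 = 0" if "Suc 0 \<le> i'" "i' \<le> \<chi>" for i' using wc0[of i'] that by simp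
        have wdef: "op_inner q (1\<^sub>m q) (W i' j') = w i' j'" for i' j' by (simp add: w_def)
        have teq': "t (j' - Suc 0) = w 0 j' + (\<Sum>k<\<chi>. t k * w (Suc k) j')" if "1 \<le> j'" "j' \<le> \<chi>" for j'
          using teq[of "j'-1"] that by (simp add: c0_def algebra_simps)
        have seq': "s (i' - Suc 0) = (\<Sum>k<\<chi>. w i' (Suc k) * s k) - w i' (Suc \<chi>)" if "1 \<le> i'" "i' \<le> \<chi>" for i'
          using seq[of "i'-1"] that by (simp add: b0_def algebra_simps)
        have "comp_mat q (1\<^sub>m q) (\<chi>+2) W' $$ (i,j) = op_inner q (1\<^sub>m q) (W' i j)"
          using ij unfolding comp_mat_def by simp
        also have "\<dots> = (\<Sum>k<\<chi>+2. L $$ (i,k) * (\<Sum>l<\<chi>+2. w k l * Li $$ (l,j)))" by (rule W0ent)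
        also have "\<dots> = (if 1 \<le> i \<and> i \<le> \<chi> \<and> 1 \<le> j \<and> j \<le> \<chi> then op_inner q (1\<^sub>m q) (W i j) else if i = j then 1 else 0)"
        proof -
          consider "i = 0" | "1 \<le> i \<and> i \<le> \<chi>" | "i = \<chi>+1" using i by linarith
          then show ?thesis
          proof cases
            case 1
            show ?thesis unfolding L_def Li_def
              by (simp only: RL[OF ij(1)] CLi[OF ij(2)]) (use 1 j nc in \<open>auto simp: S1 S2 S3 wc0' wnn' wlr' w00 teq' seq' wk0 wi0 wdef algebra_simps\<close>)
          next
            case 2
            show ?thesis unfolding L_def Li_def
              by (simp only: RL[OF ij(1)] CLi[OF ij(2)]) (use 2 j nc in \<open>auto simp: S1 S2 S3 wc0' wnn' wlr' w00 teq' seq' wk0 wi0 wdef algebra_simps\<close>)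
          next
            case 3
            show ?thesis unfolding L_def Li_def
              by (simp only: RL[OF ij(1)] CLi[OF ij(2)]) (use 3 j nc in \<open>auto simp: S1 S2 S3 wc0' wnn' wlr' w00 teq' seq' wk0 wi0 wdef algebra_simps\<close>)
          qed
        qed
        finally show ?thesis .
      qed
    qed
  qed
qed

end
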